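(* Every prime tournament which is not isomorphic to $P_n$ for any $n$ has at most one matching ordering.
   Context: A tournament is a finite, non-null, loopless directed graph in which for any two distinct vertices $u,v$ there is exactly one edge with both ends in $\{u,v\}$; write $u\to v$ for the edge from $u$ to $v$. A homogeneous set of $G$ is a set $X\subseteq V(G)$ such that each vertex outside $X$ either has edges to all of $X$ or edges from all of $X$; $G$ is prime if every homogeneous set $X$ has $|X|\le1$ or $X=V(G)$. Given an ordering $v_1,\dots,v_n$ of the vertices, a backedge is an edge $v_j\to v_i$ with $j>i$; the ordering is a matching ordering if every vertex is the head or tail of at most one backedge. $P_n$ is the tournament on $v_1,\dots,v_n$ with $v_i\to v_j$ if $j-i\ge2$ and $v_{i+1}\to v_i$ for $1\le i\le n-1$. *)

theory Defs
  imports Main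
begin

text \<open>A tournament is given by a vertex set V and an edge predicate E, where E u v means u \<rightarrow> v.
  Only the restriction of E to V matters.\<close>

definition tournament :: "'a set \<Rightarrow> ('a \<Rightarrow> 'a \<Rightarrow> bool) \<Rightarrow> bool" where
  "tournament V E \<longleftrightarrow> finite V \<and> V \<noteq> {} \<and>
     (\<forall>v\<in>V. \<not> E v v) \<and>
     (\<forall>u\<in>V. \<forall>v\<in>V. u \<noteq> v \<longrightarrow> (E u v \<longleftrightarrow> \<not> E v u))"

definition homogeneous_set :: "'a set \<Rightarrow> ('a \<Rightarrow> 'a \<Rightarrow> bool) \<Rightarrow> 'a set \<Rightarrow> bool" where
  "homogeneous_set V E X \<longleftrightarrow> X \<subseteq> V \<and>
     (\<forall>v\<in>V - X. (\<forall>x\<in>X. E v x) \<or> (\<forall>x\<in>X. E x v))"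

definition prime_tournament :: "'a set \<Rightarrow> ('a \<Rightarrow> 'a \<Rightarrow> bool) \<Rightarrow> bool" where
  "prime_tournament V E \<longleftrightarrow> tournament V E \<and>
     (\<forall>X. homogeneous_set V E X \<longrightarrow> card X \<le> 1 \<or> X = V)"

text \<open>An ordering v_1,...,v_n of V is a list of the vertices without repetition
  (0-indexed). A backedge is a pair of positions (i,j), i<j, with vs!j \<rightarrow> vs!i.\<close>

definition ordering_of :: "'a set \<Rightarrow> 'a list \<Rightarrow> bool" where
  "ordering_of V vs \<longleftrightarrow> distinct vs \<and> set vs = V"

definition backedges :: "('a \<Rightarrow> 'a \<Rightarrow> bool) \<Rightarrow> 'a list \<Rightarrow> (nat \<times> nat) set" where
  "backedges E vs = {(i, j). i < j \<and> j < length vs \<and> E (vs ! j) (vs ! i)}"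

definition matching_ordering :: "'a set \<Rightarrow> ('a \<Rightarrow> 'a \<Rightarrow> bool) \<Rightarrow> 'a list \<Rightarrow> bool" where
  "matching_ordering V E vs \<longleftrightarrow> ordering_of V vs \<and>
     (\<forall>k < length vs. card {(i, j) \<in> backedges E vs. i = k \<or> j = k} \<le> 1)"

definition P_edge :: "nat \<Rightarrow> nat \<Rightarrow> bool" where
  "P_edge i j \<longleftrightarrow> i + 2 \<le> j \<or> i = j + 1"

definition iso_to_P :: "'a set \<Rightarrow> ('a \<Rightarrow> 'a \<Rightarrow> bool) \<Rightarrow> nat \<Rightarrow> bool" where
  "iso_to_P V E n \<longleftrightarrow> (\<exists>f. bij_betw f {0..<n} V \<and>
     (\<forall>i<n. \<forall>j<n. E (f i) (f j) \<longleftrightarrow> P_edge i j))"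

end

theory Submission
  imports Defs
begin


definition bk :: "'a set \<Rightarrow> ('a \<Rightarrow> 'a \<Rightarrow> bool) \<Rightarrow> ('a \<Rightarrow> nat) \<Rightarrow> 'a \<Rightarrow> 'a \<Rightarrow> bool" where
  "bk V E r x y \<longleftrightarrow> x \<in> V \<and> y \<in> V \<and> ((r x < r y \<and> E y x) \<or> (r y < r x \<and> E x y))"

definition invp :: "'a set \<Rightarrow> ('a \<Rightarrow> nat) \<Rightarrow> ('a \<Rightarrow> nat) \<Rightarrow> 'a \<Rightarrow> 'a \<Rightarrow> bool" where
  "invp V p q x y \<longleftrightarrow> x \<in> V \<and> y \<in> V \<and> x \<noteq> y \<and> \<not>(p x < p y \<and> q x < q y) \<and> \<not>(p y < p x \<and> q y < q x)"

lemma invp_swap: "invp V q p = invp V p q" by (auto simp: invp_def fun_eq_iff)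
lemma invp_sym: "invp V p q x y = invp V p q y x" by (auto simp: invp_def)
lemma bk_sym: "bk V E r x y = bk V E r y x" by (auto simp: bk_def)

locale TO0 =
  fixes V :: "'a set" and E :: "'a \<Rightarrow> 'a \<Rightarrow> bool" and p q :: "'a \<Rightarrow> nat" and n :: nat
  assumes tour: "tournament V E"
    and pbij: "bij_betw p V {..<n}" and qbij: "bij_betw q V {..<n}"
    and pm: "\<And>x y z. bk V E p x y \<Longrightarrow> bk V E p x z \<Longrightarrow> y = z"
    and qm: "\<And>x y z. bk V E q x y \<Longrightarrow> bk V E q x z \<Longrightarrow> y = z"
begin

abbreviation R where "R \<equiv> invp V p q"

lemma tE: "x\<in>V \<Longrightarrow> y\<in>V \<Longrightarrow> x\<noteq>y \<Longrightarrow> E x y \<longleftrightarrow> \<not> E y x"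
  using tour unfolding tournament_def by blast
lemma irr: "x\<in>V \<Longrightarrow> \<not>E x x" using tour unfolding tournament_def by blast
lemma finV: "finite V" using tour unfolding tournament_def by blast
lemma cardV: "card V = n" using bij_betw_same_card[OF pbij] by simp
lemma p_inj: "x\<in>V \<Longrightarrow> y\<in>V \<Longrightarrow> p x = p y \<Longrightarrow> x = y"
  using pbij unfolding bij_betw_def inj_on_def by blast
lemma q_inj: "x\<in>V \<Longrightarrow> y\<in>V \<Longrightarrow> q x = q y \<Longrightarrow> x = y"
  using qbij unfolding bij_betw_def inj_on_def by blast
lemma p_lt: "x\<in>V \<Longrightarrow> p x < n" using pbij unfolding bij_betw_def by auto
lemma q_lt: "x\<in>V \<Longrightarrow> q x < n" using qbij unfolding bij_betw_def by auto
lemma p_surj: "i<n \<Longrightarrow> \<exists>x\<in>V. p x = i" using pbij unfolding bij_betw_def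
  by (metis imageE lessThan_iff)
lemma q_surj: "i<n \<Longrightarrow> \<exists>x\<in>V. q x = i" using qbij unfolding bij_betw_def
  by (metis imageE lessThan_iff)

lemma bk_V: "bk V E r x y \<Longrightarrow> x\<in>V \<and> y\<in>V" by (simp add: bk_def)
lemma bk_ne: "bk V E r x y \<Longrightarrow> x \<noteq> y" by (auto simp: bk_def)
lemma R_V: "R x y \<Longrightarrow> x\<in>V \<and> y \<in>V \<and> x\<noteq>y" by (simp add: invp_def)

lemma F2: assumes "x\<in>V" "y\<in>V" "x\<noteq>y"
  shows "R x y \<longleftrightarrow> (bk V E p x y \<noteq> bk V E q x y)"
proof -
  have "p x \<noteq> p y" "q x \<noteq> q y" using p_inj q_inj assms by blast+
  moreover have "E x y \<longleftrightarrow> \<not>E y x" using tE assms by blast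
  ultimately show ?thesis using assms unfolding invp_def bk_def by (auto simp: linorder_neq_iff)
qed

lemma NB: assumes "x\<in>V" "y\<in>V" "x\<noteq>y" "\<not> bk V E p x y" shows "E x y \<longleftrightarrow> p x < p y"
proof -
  have "p x \<noteq> p y" using p_inj assms by blast
  moreover have "E x y \<longleftrightarrow> \<not>E y x" using tE assms by blast
  ultimately show ?thesis using assms unfolding bk_def by (auto simp: linorder_neq_iff)
qed

lemma F4: assumes "R x z" "y\<in>V" "p x < p y" "p y < p z" shows "R x y \<or> R y z"
proof -
  have V: "x\<in>V" "z\<in>V" using assms R_V by auto
  have "y \<noteq> x" "y \<noteq> z" using assms by auto
  hence "q y \<noteq> q x" "q y \<noteq> q z" using q_inj V assms(2) by blast+
  moreover have "q z \<noteq> q x" using q_inj V R_V[OF assms(1)] by blast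
  hence "q z < q x" using assms unfolding invp_def by (auto simp: linorder_neq_iff)
  ultimately show ?thesis using assms V \<open>y \<noteq> x\<close> \<open>y \<noteq> z\<close> unfolding invp_def by auto
qed

lemma F5: assumes pr: "prime_tournament V E" and n3: "3 \<le> n" and b: "bk V E p x y" and lt: "p x < p y"
  shows "\<exists>v\<in>V. p x < p v \<and> p v < p y"
proof (rule ccontr)
  assume nv: "\<not> ?thesis"
  have V: "x\<in>V" "y\<in>V" "x\<noteq>y" using b bk_V bk_ne by blast+
  have py: "p y = Suc (p x)"
  proof (rule ccontr)
    assume "p y \<noteq> Suc (p x)"
    hence "Suc (p x) < n" using lt p_lt[OF V(2)] by linarith
    then obtain v where "v\<in>V" "p v = Suc (p x)" using p_surj by blast
    thus False using nv lt \<open>p y \<noteq> Suc (p x)\<close> by force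
  qed
  have "homogeneous_set V E {x,y}"
    unfolding homogeneous_set_def
  proof (intro conjI ballI)
    show "{x,y} \<subseteq> V" using V by auto
    fix w assume w: "w \<in> V - {x,y}"
    have nbx: "\<not> bk V E p w x"
    proof
      assume "bk V E p w x" hence "bk V E p x w" by (simp add: bk_sym)
      with b have "y = w" using pm by blast
      thus False using w by auto
    qed
    have nby: "\<not> bk V E p w y"
    proof
      assume "bk V E p w y" hence "bk V E p y w" by (simp add: bk_sym)
      moreover have "bk V E p y x" using b by (simp add: bk_sym)
      ultimately have "x = w" using pm by blast
      thus False using w by auto
    qed
    have ex: "E w x \<longleftrightarrow> p w < p x" using NB[OF _ _ _ nbx] w V by auto
    have ey: "E w y \<longleftrightarrow> p w < p y" using NB[OF _ _ _ nby] w V by auto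
    have "p w \<noteq> p x" "p w \<noteq> p y" using w V p_inj by blast+
    show "(\<forall>z\<in>{x, y}. E w z) \<or> (\<forall>z\<in>{x, y}. E z w)"
    proof (cases "p w < p x")
      case True thus ?thesis using ex ey py by auto
    next
      case False
      hence "\<not> E w x" "\<not> E w y" using ex ey py \<open>p w \<noteq> p x\<close> \<open>p w \<noteq> p y\<close> by auto
      thus ?thesis using tE w V by auto
    qed
  qed
  hence "card {x,y} \<le> 1 \<or> {x,y} = V" using pr unfolding prime_tournament_def by blast
  moreover have "card {x,y} = 2" using V by auto
  ultimately have "card V = 2" by auto
  thus False using cardV n3 by auto
qed

lemma R_sym: "R x y \<Longrightarrow> R y x" using invp_sym by metis

lemma Rs_sym: "R\<^sup>*\<^sup>* x y \<Longrightarrow> R\<^sup>*\<^sup>* y x"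
proof (induction rule: rtranclp_induct)
  case base thus ?case by simp
next
  case (step y z) thus ?case using R_sym by (meson converse_rtranclp_into_rtranclp)
qed

lemma conn_all: assumes pr: "prime_tournament V E" and x0: "R x0 y0" and y: "y \<in> V"
  shows "R\<^sup>*\<^sup>* x0 y"
proof -
  define C where "C = {y. R\<^sup>*\<^sup>* x0 y}"
  have x0V: "x0 \<in> V" "y0 \<in> V" "x0 \<noteq> y0" using R_V[OF x0] by auto
  have CV: "C \<subseteq> V"
  proof
    fix y assume "y \<in> C" hence "R\<^sup>*\<^sup>* x0 y" by (simp add: C_def)
    thus "y \<in> V" by (induction rule: rtranclp_induct) (use x0V R_V in auto)
  qed
  have clos: "\<And>y z. y \<in> C \<Longrightarrow> R\<^sup>*\<^sup>* y z \<Longrightarrow> z \<in> C" by (auto simp: C_def)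
  have clos1: "\<And>y z. y \<in> C \<Longrightarrow> R y z \<Longrightarrow> z \<in> C" by (auto simp: C_def)
  have part: "\<And>y. y \<in> C \<Longrightarrow> \<exists>u. R y u"
  proof -
    fix y assume "y \<in> C" hence "R\<^sup>*\<^sup>* x0 y" by (simp add: C_def)
    thus "\<exists>u. R y u"
    proof (cases rule: rtranclp.cases)
      case rtrancl_refl thus ?thesis using x0 by blast
    next
      case (rtrancl_into_rtrancl b) thus ?thesis using R_sym by blast
    qed
  qed
  have nobk: "\<And>y w. y \<in> C \<Longrightarrow> w \<in> V \<Longrightarrow> w \<notin> C \<Longrightarrow> \<not> bk V E p w y"
  proof
    fix y w assume yC: "y \<in> C" and wV: "w \<in> V" and wC: "w \<notin> C" and b: "bk V E p w y"
    have b': "bk V E p y w" using b bk_sym by metis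
    have yV: "y \<in> V" using yC CV by auto
    have ne: "y \<noteq> w" using yC wC by auto
    have nR: "\<not> R y w" using clos1 yC wC by blast
    hence bq: "bk V E q y w" using F2[OF yV wV ne] b' by blast
    obtain u where u: "R y u" using part yC by blast
    have "u \<noteq> y" "u \<in> V" using R_V[OF u] by auto
    hence "bk V E p y u \<or> bk V E q y u" using F2[OF yV \<open>u\<in>V\<close>] u by blast
    hence "u = w" using pm qm b' bq by blast
    thus False using u nR by simp
  qed
  have interval: "\<And>a b w. R\<^sup>*\<^sup>* a b \<Longrightarrow> a \<in> C \<Longrightarrow> w \<in> V \<Longrightarrow>
      (p a < p w \<and> p w < p b) \<or> (p b < p w \<and> p w < p a) \<Longrightarrow> w \<in> C"
  proof -
    fix a b w assume ab: "R\<^sup>*\<^sup>* a b" and aC: "a \<in> C" and wV: "w \<in> V"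
    show "(p a < p w \<and> p w < p b) \<or> (p b < p w \<and> p w < p a) \<Longrightarrow> w \<in> C"
      using ab
    proof (induction arbitrary: rule: rtranclp_induct)
      case base thus ?case by auto
    next
      case (step m b)
      have mC: "m \<in> C" using clos aC step.hyps(1) by blast
      have bC: "b \<in> C" using clos1 mC step.hyps(2) by blast
      have mV: "m \<in> V" using mC CV by auto
      show ?case
      proof (cases "p w = p m")
        case True thus ?thesis using p_inj wV mV mC by metis
      next
        case False
        show ?thesis
        proof (cases "(p a < p w \<and> p w < p m) \<or> (p m < p w \<and> p w < p a)")
          case True thus ?thesis using step.IH by blast
        next
          case False
          hence btw: "(p m < p w \<and> p w < p b) \<or> (p b < p w \<and> p w < p m)"
            using step.prems \<open>p w \<noteq> p m\<close> by linarith
          thus ?thesis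
          proof
            assume "p m < p w \<and> p w < p b"
            hence "R m w \<or> R w b" using F4[OF step.hyps(2) wV] by blast
            thus ?thesis using clos1[OF mC] clos1[OF bC] R_sym by blast
          next
            assume "p b < p w \<and> p w < p m"
            hence "R b w \<or> R w m" using F4[OF R_sym[OF step.hyps(2)] wV] by blast
            thus ?thesis using clos1[OF mC] clos1[OF bC] R_sym by blast
          qed
        qed
      qed
    qed
  qed
  have x0C: "x0 \<in> C" by (simp add: C_def)
  have "homogeneous_set V E C"
    unfolding homogeneous_set_def
  proof (intro conjI ballI)
    show "C \<subseteq> V" by (rule CV)
    fix w assume w: "w \<in> V - C"
    have ord: "\<And>z. z \<in> C \<Longrightarrow> E w z \<longleftrightarrow> p w < p z"
      using NB nobk w CV by blast
    have ord2: "\<And>z. z \<in> C \<Longrightarrow> E z w \<longleftrightarrow> \<not> p w < p z"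
      using ord tE w CV by blast
    have pne: "\<And>z. z \<in> C \<Longrightarrow> p z \<noteq> p w" using p_inj w CV by blast
    have rc: "\<And>z. z \<in> C \<Longrightarrow> R\<^sup>*\<^sup>* x0 z" by (simp add: C_def)
    show "(\<forall>z\<in>C. E w z) \<or> (\<forall>z\<in>C. E z w)"
    proof (cases "\<exists>z\<in>C. p z < p w")
      case True
      then obtain z where z: "z \<in> C" "p z < p w" by blast
      have "\<forall>z'\<in>C. \<not> p w < p z'"
      proof (intro ballI notI)
        fix z' assume "z' \<in> C" "p w < p z'"
        have "R\<^sup>*\<^sup>* z z'" using rc[OF z(1)] rc[OF \<open>z'\<in>C\<close>] Rs_sym by (meson rtranclp_trans)
        hence "w \<in> C" using interval[OF _ z(1)] w z(2) \<open>p w < p z'\<close> by blast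
        thus False using w by blast
      qed
      thus ?thesis using ord2 by blast
    next
      case False
      hence "\<forall>z\<in>C. p w < p z" using pne by (meson linorder_neqE_nat)
      thus ?thesis using ord by blast
    qed
  qed
  hence "card C \<le> 1 \<or> C = V" using pr unfolding prime_tournament_def by blast
  moreover have "card C \<ge> 2"
  proof -
    have "{x0, y0} \<subseteq> C" using x0C clos1[OF x0C x0] by auto
    moreover have "finite C" using CV finV finite_subset by blast
    ultimately have "card {x0,y0} \<le> card C" using card_mono by blast
    thus ?thesis using x0V by auto
  qed
  ultimately have "C = V" by auto
  thus ?thesis using y unfolding C_def by blast
qed

lemma partner_conn: "R x0 y0 \<Longrightarrow> R\<^sup>*\<^sup>* x0 x \<Longrightarrow> \<exists>u. R x u"
  by (erule rtranclp.cases) (use R_sym in blast)+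

end


lemma TO0_swap: "TO0 V E p q n \<Longrightarrow> TO0 V E q p n" unfolding TO0_def by blast

context TO0 begin

lemma F4q: assumes "R x z" "y\<in>V" "q x < q y" "q y < q z" shows "R x y \<or> R y z"
proof -
  interpret sw: TO0 V E q p n by (rule TO0_swap[OF TO0_axioms])
  have e: "invp V q p = invp V p q" by (rule invp_swap)
  show ?thesis using sw.F4[of x z y] assms unfolding e by blast
qed

lemma F5q: assumes "prime_tournament V E" "3 \<le> n" "bk V E q x y" "q x < q y"
  shows "\<exists>v\<in>V. q x < q v \<and> q v < q y"
proof -
  interpret sw: TO0 V E q p n by (rule TO0_swap[OF TO0_axioms])
  show ?thesis using sw.F5 assms by blast
qed

end

locale TO = TO0 +
  assumes n3: "3 \<le> n" and prime: "prime_tournament V E"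
    and partner: "\<And>x. x \<in> V \<Longrightarrow> \<exists>y. invp V p q x y"

lemma TO_swap: "TO V E p q n \<Longrightarrow> TO V E q p n"
  unfolding TO_def TO_axioms_def using TO0_swap invp_swap by metis

context TO begin

lemma F3: assumes b: "bk V E p x y" shows "\<not> bk V E q x y"
proof
  assume bq: "bk V E q x y"
  have V: "x\<in>V" "y\<in>V" "x\<noteq>y" using b bk_V bk_ne by blast+
  have nR: "\<not> R x y" using F2[OF V] b bq by blast
  obtain u where u: "R x u" using partner V by blast
  have "u\<in>V" "x\<noteq>u" using R_V[OF u] by auto
  hence "bk V E p x u \<or> bk V E q x u" using F2[OF V(1)] u by blast
  hence "u = y" using pm qm b bq by blast
  thus False using u nR by simp
qed

lemma F3q: assumes b: "bk V E q x y" shows "\<not> bk V E p x y"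
  using F3 b by blast

lemma R_bk: "R x y \<Longrightarrow> bk V E p x y \<or> bk V E q x y"
  using F2 R_V by blast
lemma bk_R: "bk V E p x y \<Longrightarrow> R x y"
  using F2 F3 bk_V bk_ne by blast
lemma bkq_R: "bk V E q x y \<Longrightarrow> R x y"
  using F2 F3q bk_V bk_ne by blast

lemma R_p_lt: "R x y \<Longrightarrow> p x < p y \<Longrightarrow> q y < q x"
  using q_inj unfolding invp_def by (metis linorder_neqE_nat)
lemma R_q_lt: "R x y \<Longrightarrow> q x < q y \<Longrightarrow> p y < p x"
  using p_inj unfolding invp_def by (metis linorder_neqE_nat)
lemma nR_p_lt: "x\<in>V \<Longrightarrow> y\<in>V \<Longrightarrow> x\<noteq>y \<Longrightarrow> \<not> R x y \<Longrightarrow> p x < p y \<Longrightarrow> q x < q y"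
  unfolding invp_def by auto
lemma nR_q_lt: "x\<in>V \<Longrightarrow> y\<in>V \<Longrightarrow> x\<noteq>y \<Longrightarrow> \<not> R x y \<Longrightarrow> q x < q y \<Longrightarrow> p x < p y"
  unfolding invp_def by auto
lemma pq_R: "x\<in>V \<Longrightarrow> y\<in>V \<Longrightarrow> p x < p y \<Longrightarrow> q y < q x \<Longrightarrow> R x y"
  unfolding invp_def by auto

lemma K: assumes bxy: "bk V E p x y" and lt: "p x < p y" shows "q x = Suc (q y)"
proof (rule ccontr)
  assume ne: "q x \<noteq> Suc (q y)"
  have V: "x\<in>V" "y\<in>V" "x\<noteq>y" using bxy bk_V bk_ne by blast+
  have Rxy: "R x y" using bk_R bxy by blast
  have qyx: "q y < q x" using R_p_lt Rxy lt by blast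
  obtain v where v: "v\<in>V" "p x < p v" "p v < p y" using F5[OF prime n3 bxy lt] by blast
  have sq: "Suc (q y) < q x" using qyx ne by linarith
  hence "Suc (q y) < n" using q_lt V by (meson less_trans)
  then obtain w where w: "w\<in>V" "q w = Suc (q y)" using q_surj by blast
  have vxy: "v \<noteq> x" "v \<noteq> y" using v by auto
  have wxy: "w \<noteq> x" "w \<noteq> y" using w sq by auto
  have bqs: "\<And>a b. bk V E q a b = bk V E q b a" using bk_sym by metis
  have bps: "\<And>a b. bk V E p a b = bk V E p b a" using bk_sym by metis
  have byx: "bk V E p y x" using bxy bps by blast
  have kx: "\<And>u. R x u \<Longrightarrow> u \<noteq> y \<Longrightarrow> bk V E q x u"
  proof -
    fix u assume a: "R x u" "u \<noteq> y"
    have "bk V E p x u \<or> bk V E q x u" using R_bk[OF a(1)] .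
    moreover have "\<not> bk V E p x u" using pm[OF bxy] a(2) by metis
    ultimately show "bk V E q x u" by blast
  qed
  have ky: "\<And>u. R y u \<Longrightarrow> u \<noteq> x \<Longrightarrow> bk V E q y u"
  proof -
    fix u assume a: "R y u" "u \<noteq> x"
    have "bk V E p y u \<or> bk V E q y u" using R_bk[OF a(1)] .
    moreover have "\<not> bk V E p y u" using pm[OF byx] a(2) by metis
    ultimately show "bk V E q y u" by blast
  qed
  have hv: "R x v \<or> R v y" using F4[OF Rxy v(1-3)] .
  have hw: "R y w \<or> R w x" using F4q[OF R_sym[OF Rxy] w(1)] w(2) sq by simp
  have bv: "bk V E q x v \<or> bk V E q y v"
  proof (cases "R x v")
    case True thus ?thesis using kx vxy by blast
  next
    case False hence "R y v" using hv R_sym by blast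
    thus ?thesis using ky vxy by blast
  qed
  have bw: "bk V E q y w \<or> bk V E q x w"
  proof (cases "R y w")
    case True thus ?thesis using ky wxy by blast
  next
    case False hence "R x w" using hw R_sym by blast
    thus ?thesis using kx wxy by blast
  qed
  have vw: "v \<noteq> w"
  proof
    assume "v = w"
    hence "R x v" "R y v" using v w V sq pq_R R_sym by auto
    hence "bk V E q v x" "bk V E q v y" using kx ky vxy bqs by blast+
    thus False using qm V(3) by metis
  qed
  show False
  proof (cases "bk V E q x v")
    case True
    hence "\<not> bk V E q x w" using qm vw by metis
    hence byw: "bk V E q y w" using bw by blast
    obtain u where "u\<in>V" "q y < q u" "q u < q w" using F5q[OF prime n3 byw] w by auto
    thus False using w by simp
  next
    case False
    hence byv: "bk V E q y v" using bv by blast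
    hence nbyw: "\<not> bk V E q y w" using qm vw by metis
    hence bxw: "bk V E q x w" using bw by blast
    have bwx: "bk V E q w x" using bxw bqs by blast
    have nRxv: "\<not> R x v"
    proof
      assume "R x v" hence "bk V E q x v" using kx vxy by blast
      thus False using False by blast
    qed
    have qxv: "q x < q v" using nR_p_lt[OF V(1) v(1) vxy(1)[symmetric] nRxv v(2)] .
    have Rxw: "R x w" using bkq_R[OF bxw] .
    have pxw: "p x < p w" using R_q_lt[OF R_sym[OF Rxw]] w sq by simp
    have nRyw: "\<not> R y w"
    proof
      assume "R y w" hence "bk V E q y w" using ky wxy by blast
      thus False using nbyw by blast
    qed
    have pyw: "p y < p w" using nR_q_lt[OF V(2) w(1) wxy(2)[symmetric] nRyw] w by simp
    have Rvw: "R v w" using pq_R[OF v(1) w(1)] v pyw qxv sq w by simp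
    have nbqwv: "\<not> bk V E q w v" using qm[OF bwx] vxy(1) by metis
    have bpwv: "bk V E p w v" using R_bk[OF R_sym[OF Rvw]] nbqwv by blast
    obtain u where u: "u\<in>V" "q w < q u" "q u < q x"
      using F5q[OF prime n3 bwx] w sq by auto
    have uyw: "u \<noteq> y" "u \<noteq> w" "u \<noteq> x" using u w by auto
    have h: "R w u \<or> R u x" using F4q[OF R_sym[OF Rxw] u(1-3)] .
    have nRux: "\<not> R u x"
    proof
      assume "R u x" hence "bk V E p x u \<or> bk V E q x u" using R_bk R_sym by blast
      moreover have "\<not> bk V E p x u" using pm[OF bxy] uyw by metis
      moreover have "\<not> bk V E q x u" using qm[OF bxw] uyw by metis
      ultimately show False by blast
    qed
    hence "R w u" using h by blast
    hence "bk V E p w u \<or> bk V E q w u" using R_bk by blast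
    moreover have "\<not> bk V E q w u" using qm[OF bwx] uyw by metis
    ultimately have "bk V E p w u" by blast
    hence "u = v" using pm[OF bpwv] by metis
    thus False using u qxv by simp
  qed
qed


lemma S1: assumes b: "bk V E p x y" and lt: "p x < p y" shows "p x + q x < p y + q y"
proof -
  obtain v where "v\<in>V" "p x < p v" "p v < p y" using F5[OF prime n3 b lt] by blast
  thus ?thesis using K[OF b lt] by simp
qed

end

context TO begin
lemma S1q: assumes b: "bk V E q x y" and lt: "q x < q y" shows "p x + q x < p y + q y"
proof -
  interpret sw: TO V E q p n by (rule TO_swap[OF TO_axioms])
  show ?thesis using sw.S1[OF b lt] by simp
qed

definition s where "s x = p x + q x"

lemma dir: assumes r: "R x y" shows "E x y \<longleftrightarrow> s y < s x"
proof -
  have V: "x\<in>V" "y\<in>V" "x\<noteq>y" using R_V[OF r] by auto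
  have t: "E x y \<longleftrightarrow> \<not> E y x" using tE V by blast
  have bps: "bk V E p y x" if "bk V E p x y" using that bk_sym by metis
  have bqs: "bk V E q y x" if "bk V E q x y" using that bk_sym by metis
  from R_bk[OF r] show ?thesis
  proof
    assume b: "bk V E p x y"
    show ?thesis
    proof (cases "p x < p y")
      case True
      hence "E y x" using b unfolding bk_def by auto
      moreover have "s x < s y" using S1[OF b True] by (simp add: s_def)
      ultimately show ?thesis using t by auto
    next
      case False hence lt: "p y < p x" using p_inj V by (metis linorder_neqE_nat)
      hence "E x y" using b unfolding bk_def by auto
      moreover have "s y < s x" using S1[OF bps[OF b] lt] by (simp add: s_def)
      ultimately show ?thesis by auto
    qed
  next
    assume b: "bk V E q x y"
    show ?thesis
    proof (cases "q x < q y")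
      case True
      hence "E y x" using b unfolding bk_def by auto
      moreover have "s x < s y" using S1q[OF b True] by (simp add: s_def)
      ultimately show ?thesis using t by auto
    next
      case False hence lt: "q y < q x" using q_inj V by (metis linorder_neqE_nat)
      hence "E x y" using b unfolding bk_def by auto
      moreover have "s y < s x" using S1q[OF bqs[OF b] lt] by (simp add: s_def)
      ultimately show ?thesis by auto
    qed
  qed
qed

lemma R_s_ne: assumes "R x y" shows "s x \<noteq> s y"
proof
  assume e: "s x = s y"
  have "\<not> E x y" "\<not> E y x" using dir[OF assms] dir[OF R_sym[OF assms]] e by auto
  thus False using tE R_V[OF assms] by blast
qed

lemma pm2: assumes "bk V E p a b" "bk V E p b c" shows "a = c"
proof -
  have "bk V E p b a" using assms(1) bk_sym by metis
  thus ?thesis using pm[OF _ assms(2)] by blast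
qed
lemma qm2: assumes "bk V E q a b" "bk V E q b c" shows "a = c"
proof -
  have "bk V E q b a" using assms(1) bk_sym by metis
  thus ?thesis using qm[OF _ assms(2)] by blast
qed

lemma notri: assumes "R a b" "R b c" "R a c" shows False
proof -
  have ne: "a \<noteq> b" "b \<noteq> c" "a \<noteq> c" using assms R_V by auto
  have ca: "bk V E p c a \<or> bk V E q c a" using R_bk[OF R_sym[OF assms(3)]] .
  show False
  proof (cases "bk V E p a b")
    case ab: True
    show False
    proof (cases "bk V E p b c")
      case True thus False using pm2[OF ab True] ne by blast
    next
      case False hence bc: "bk V E q b c" using R_bk[OF assms(2)] by blast
      from ca show False
      proof
        assume h: "bk V E p c a" show False using pm2[OF h ab] ne by blast
      next
        assume h: "bk V E q c a" show False using qm2[OF bc h] ne by blast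
      qed
    qed
  next
    case False hence ab: "bk V E q a b" using R_bk[OF assms(1)] by blast
    show False
    proof (cases "bk V E q b c")
      case True thus False using qm2[OF ab True] ne by blast
    next
      case False hence bc: "bk V E p b c" using R_bk[OF assms(2)] by blast
      from ca show False
      proof
        assume h: "bk V E p c a" show False using pm2[OF bc h] ne by blast
      next
        assume h: "bk V E q c a" show False using qm2[OF h ab] ne by blast
      qed
    qed
  qed
qed

lemma same_side: assumes "R y a" "R y b" "a \<noteq> b" shows "p y < p a \<longleftrightarrow> p y < p b"
proof (rule ccontr)
  assume h: "\<not> ?thesis"
  have V: "a \<in> V" "b\<in>V" "y \<in> V" "a\<noteq>y" "b\<noteq>y" using assms R_V by auto
  have pa: "p a \<noteq> p y" "p b \<noteq> p y" using V p_inj by metis+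
  show False
  proof (cases "p y < p a")
    case True
    hence "p b < p y" using h pa by auto
    hence "q y < q b" using R_p_lt[OF R_sym[OF assms(2)]] by blast
    moreover have "q a < q y" using R_p_lt[OF assms(1) True] .
    ultimately have "R b a" using pq_R V \<open>p b < p y\<close> True by auto
    thus False using notri assms R_sym by metis
  next
    case False
    hence "p a < p y" "p y < p b" using h pa by auto
    hence "q y < q a" "q b < q y" using R_p_lt assms R_sym by blast+
    hence "R a b" using pq_R V \<open>p a < p y\<close> \<open>p y < p b\<close> by auto
    thus False using notri assms R_sym by metis
  qed
qed

lemma straddle_key: assumes pa': "bk V E p y a" and qb: "bk V E q y b"
  shows "s a < s y \<longleftrightarrow> s y < s b"
proof -
  have Va: "a \<in> V" "y \<in> V" "a \<noteq> y" using bk_V[OF pa'] bk_ne[OF pa'] by auto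
  have ab: "a \<noteq> b" using pa' qb F3 by blast
  have ss': "p y < p a \<longleftrightarrow> p y < p b" using same_side[OF bk_R[OF pa'] bkq_R[OF qb] ab] .
  have pne: "p a \<noteq> p y" using Va p_inj by metis
  have qb': "bk V E q b y" using qb bk_sym by metis
  have pa'': "bk V E p a y" using pa' bk_sym by metis
  show ?thesis
  proof (cases "p y < p a")
    case True
    have 1: "s y < s a" using S1[OF pa' True] by (simp add: s_def)
    have "p y < p b" using ss' True by blast
    hence "q b < q y" using R_p_lt[OF bkq_R[OF qb]] by blast
    hence "s b < s y" using S1q[OF qb'] by (simp add: s_def)
    thus ?thesis using 1 by auto
  next
    case False
    hence lt: "p a < p y" using pne by simp
    have lt2: "\<not> p y < p b" using ss' False by blast
    have "p b \<noteq> p y" using bk_V[OF qb] bk_ne[OF qb] p_inj by metis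
    hence lt3: "p b < p y" using lt2 by simp
    have 1: "s a < s y" using S1[OF pa'' lt] by (simp add: s_def)
    have "q y < q b" using R_p_lt[OF R_sym[OF bkq_R[OF qb]] lt3] .
    hence "s y < s b" using S1q[OF qb] by (simp add: s_def)
    thus ?thesis using 1 by auto
  qed
qed

lemma straddle: assumes r: "R y a" "R y b" "a \<noteq> b" shows "s a < s y \<longleftrightarrow> s y < s b"
proof -
  have 1: "bk V E p y a \<or> bk V E q y a" "bk V E p y b \<or> bk V E q y b" using R_bk r by blast+
  have 2: "\<not> (bk V E p y a \<and> bk V E p y b)" using pm[of y a b] r(3) by blast
  have 3: "\<not> (bk V E q y a \<and> bk V E q y b)" using qm[of y a b] r(3) by blast
  have sa: "s a \<noteq> s y" using R_s_ne[OF r(1)] by simp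
  have sb: "s b \<noteq> s y" using R_s_ne[OF r(2)] by simp
  show ?thesis
  proof (cases "bk V E p y a")
    case True
    hence "bk V E q y b" using 1 2 by blast
    thus ?thesis using straddle_key[OF True] by blast
  next
    case False
    hence qa: "bk V E q y a" "bk V E p y b" using 1 3 by blast+
    have "s b < s y \<longleftrightarrow> s y < s a" using straddle_key[OF qa(2) qa(1)] .
    thus ?thesis using sa sb by auto
  qed
qed

lemma s_inj: assumes "x\<in>V" "y\<in>V" "s x = s y" shows "x = y"
proof (rule ccontr)
  assume ne: "x \<noteq> y"
  show False
  proof (cases "R x y")
    case True thus False using R_s_ne assms by blast
  next
    case False
    have "p x \<noteq> p y" using p_inj assms ne by blast
    thus False using False assms ne unfolding invp_def s_def by (auto simp: linorder_neq_iff)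
  qed
qed

lemma noninv: assumes "x\<in>V" "y\<in>V" "x\<noteq>y" "\<not> R x y" shows "E x y \<longleftrightarrow> s x < s y"
proof -
  have "\<not> bk V E p x y" using bk_R assms by blast
  hence e: "E x y \<longleftrightarrow> p x < p y" using NB assms by blast
  have "p x \<noteq> p y" using p_inj assms by blast
  thus ?thesis using e assms unfolding invp_def s_def by (auto simp: linorder_neq_iff)
qed

lemma betw_s: assumes "R x z" "w \<in> V" "s x < s w" "s w < s z" shows "R x w \<or> R w z"
proof (rule ccontr)
  assume h: "\<not> ?thesis"
  have V: "x\<in>V" "z\<in>V" using assms R_V by auto
  have "w \<noteq> x" "w \<noteq> z" using assms by auto
  hence "p x < p w \<and> q x < q w" "p w < p z \<and> q w < q z"
    using h assms V unfolding invp_def s_def by auto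
  thus False using assms(1) unfolding invp_def by auto
qed

lemma conn: assumes "x \<in> V" "y \<in> V" shows "R\<^sup>*\<^sup>* x y"
proof -
  obtain y0 where r: "R x y0" using partner assms by blast
  have "R\<^sup>*\<^sup>* x y" using conn_all[OF prime r assms(2)] .
  thus ?thesis .
qed

lemma cross: "R\<^sup>*\<^sup>* a b \<Longrightarrow> a \<in> X \<Longrightarrow> b \<notin> X \<Longrightarrow> \<exists>c d. c \<in> X \<and> d \<notin> X \<and> R c d"
proof (induction rule: rtranclp_induct)
  case base thus ?case by simp
next
  case (step m b) thus ?case by (cases "m \<in> X") auto
qed

lemma iso: "iso_to_P V E n"
proof -
  obtain L where L: "distinct L" "set L = V" using finite_distinct_list finV by blast
  define us where "us = sort_key s L"
  have us: "distinct us" "set us = V" "length us = n" "sorted (map s us)"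
    using L cardV distinct_card[OF L(1)] unfolding us_def by auto
  have usV: "\<And>i. i < n \<Longrightarrow> us ! i \<in> V" using us nth_mem by metis
  have slt: "\<And>i j. i < j \<Longrightarrow> j < n \<Longrightarrow> s (us!i) < s (us!j)"
  proof -
    fix i j assume ij: "i < j" "j < n"
    have "s (us!i) \<le> s (us!j)" using sorted_nth_mono[OF us(4), of i j] ij us(3) by simp
    moreover have "us!i \<noteq> us!j" using us ij nth_eq_iff_index_eq by fastforce
    hence "s (us!i) \<noteq> s (us!j)" using s_inj usV ij by (meson less_trans)
    ultimately show "s (us!i) < s (us!j)" by simp
  qed
  have adj: "\<And>i j. i < j \<Longrightarrow> j < n \<Longrightarrow> R (us!i) (us!j) \<Longrightarrow> j = Suc i"
  proof (rule ccontr)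
    fix i j assume ij: "i < j" "j < n" "R (us!i) (us!j)" "j \<noteq> Suc i"
    hence k: "Suc i < j" by simp
    have w: "us ! Suc i \<in> V" using usV k ij by simp
    have 1: "s (us!i) < s (us!Suc i)" "s (us!Suc i) < s (us!j)" using slt k ij by auto
    from betw_s[OF ij(3) w 1] show False
    proof
      assume r: "R (us!i) (us!Suc i)"
      have "us!Suc i \<noteq> us!j" using 1 by auto
      from straddle[OF r ij(3) this] 1 slt[OF ij(1,2)] show False by simp
    next
      assume r: "R (us!Suc i) (us!j)"
      have "us!Suc i \<noteq> us!i" using 1 by auto
      from straddle[OF R_sym[OF r] R_sym[OF ij(3)] this] 1 slt[OF ij(1,2)] show False by simp
    qed
  qed
  have cons: "\<And>k. Suc k < n \<Longrightarrow> R (us!k) (us!Suc k)"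
  proof -
    fix k assume k: "Suc k < n"
    define X where "X = {us!i | i. i \<le> k}"
    have a: "us!0 \<in> X" unfolding X_def by auto
    have b: "us!Suc k \<notin> X"
    proof
      assume "us!Suc k \<in> X"
      then obtain i where "i \<le> k" "us!Suc k = us!i" unfolding X_def by auto
      thus False using us(1,3) k nth_eq_iff_index_eq by fastforce
    qed
    have "R\<^sup>*\<^sup>* (us!0) (us!Suc k)" using conn usV k by simp
    then obtain c d where cd: "c \<in> X" "d \<notin> X" "R c d" using cross a b by blast
    obtain i where i: "i \<le> k" "c = us!i" using cd unfolding X_def by auto
    have "d \<in> V" using R_V cd by blast
    then obtain j where j: "j < n" "d = us!j" using us by (metis in_set_conv_nth)
    have "k < j" using cd(2) j unfolding X_def by (metis (mono_tags, lifting) mem_Collect_eq not_le)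
    hence "j = Suc i" using adj[of i j] cd i j by simp
    hence "i = k" using i \<open>k < j\<close> by simp
    thus "R (us!k) (us!Suc k)" using cd i j \<open>j = Suc i\<close> by simp
  qed
  show ?thesis unfolding iso_to_P_def
  proof (intro exI conjI allI impI)
    show "bij_betw ((!) us) {0..<n} V"
      using bij_betw_nth[OF us(1)] us by (simp add: atLeast0LessThan)
    fix i j assume ij: "i < n" "j < n"
    have Vi: "us!i \<in> V" "us!j \<in> V" using usV ij by auto
    show "E (us!i) (us!j) \<longleftrightarrow> P_edge i j"
    proof (cases i j rule: linorder_cases)
      case equal thus ?thesis using irr Vi by (simp add: P_edge_def)
    next
      case less
      show ?thesis
      proof (cases "j = Suc i")
        case True
        have "R (us!i) (us!j)" using cons True ij by simp
        hence "E (us!i) (us!j) \<longleftrightarrow> s (us!j) < s (us!i)" by (rule dir)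
        thus ?thesis using slt[OF less ij(2)] True by (simp add: P_edge_def)
      next
        case False
        hence nr: "\<not> R (us!i) (us!j)" using adj less ij by blast
        have "us!i \<noteq> us!j" using slt[OF less ij(2)] by auto
        hence "E (us!i) (us!j) \<longleftrightarrow> s (us!i) < s (us!j)" using noninv Vi nr by blast
        thus ?thesis using slt[OF less ij(2)] False less by (auto simp: P_edge_def)
      qed
    next
      case greater
      show ?thesis
      proof (cases "i = Suc j")
        case True
        have "R (us!j) (us!i)" using cons True ij by simp
        hence "E (us!i) (us!j) \<longleftrightarrow> s (us!j) < s (us!i)" using dir R_sym by blast
        thus ?thesis using slt[OF greater ij(1)] True by (simp add: P_edge_def)
      next
        case False
        hence nr: "\<not> R (us!j) (us!i)" using adj greater ij by blast
        have "us!i \<noteq> us!j" using slt[OF greater ij(1)] by auto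
        hence "E (us!i) (us!j) \<longleftrightarrow> s (us!i) < s (us!j)" using noninv Vi nr R_sym by blast
        thus ?thesis using slt[OF greater ij(1)] False greater by (auto simp: P_edge_def)
      qed
    qed
  qed
qed
end


lemma pos_props:
  assumes d: "distinct vs" and s: "set vs = V"
  defines "p \<equiv> the_inv_into {..<length vs} ((!) vs)"
  shows "bij_betw p V {..<length vs}" "\<And>x. x \<in> V \<Longrightarrow> vs ! p x = x"
    "\<And>i. i < length vs \<Longrightarrow> p (vs ! i) = i" "\<And>x. x \<in> V \<Longrightarrow> p x < length vs"
proof -
  have b: "bij_betw ((!) vs) {..<length vs} V" using bij_betw_nth[OF d] s by simp
  show b2: "bij_betw p V {..<length vs}" unfolding p_def by (rule bij_betw_the_inv_into[OF b])
  show "\<And>x. x \<in> V \<Longrightarrow> vs ! p x = x" unfolding p_def using f_the_inv_into_f_bij_betw[OF b] by blast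
  show "\<And>i. i < length vs \<Longrightarrow> p (vs ! i) = i" unfolding p_def
    using the_inv_into_f_f b unfolding bij_betw_def by (metis lessThan_iff)
  show "\<And>x. x \<in> V \<Longrightarrow> p x < length vs" using b2 unfolding bij_betw_def by auto
qed

lemma bk_VV: "bk V E r x y \<Longrightarrow> x \<in> V \<and> y \<in> V" by (simp add: bk_def)
lemma bk_nee: "bk V E r x y \<Longrightarrow> x \<noteq> y" by (auto simp: bk_def)

lemma match_bk:
  assumes m: "matching_ordering V E vs"
    and pl: "\<And>x. x \<in> V \<Longrightarrow> p x < length vs" and pv: "\<And>x. x \<in> V \<Longrightarrow> vs ! p x = x"
    and b1: "bk V E p x y" and b2: "bk V E p x z"
  shows "y = z"
proof -
  define k where "k = p x"
  define S where "S = {(i, j) \<in> backedges E vs. i = k \<or> j = k}"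
  have xV: "x \<in> V" using b1 bk_VV by metis
  have k: "k < length vs" using pl xV k_def by simp
  have cS: "card S \<le> 1" using m k unfolding matching_ordering_def S_def by blast
  have fS: "finite S"
  proof -
    have "S \<subseteq> {..<length vs} \<times> {..<length vs}" unfolding S_def backedges_def by auto
    thus ?thesis using finite_subset by blast
  qed
  have mem: "\<And>w. bk V E p x w \<Longrightarrow> (min k (p w), max k (p w)) \<in> S \<and> p w \<noteq> k"
  proof -
    fix w assume b: "bk V E p x w"
    have wV: "w \<in> V" using b bk_VV by metis
    have xw: "x \<noteq> w" using b bk_nee by metis
    have pw: "p w < length vs" using pl wV by simp
    have "p w \<noteq> k" using pv xV wV xw k_def by metis
    moreover have "(min k (p w), max k (p w)) \<in> backedges E vs"
      using b pw k pv[OF xV] pv[OF wV] unfolding bk_def backedges_def k_def by auto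
    ultimately show "(min k (p w), max k (p w)) \<in> S \<and> p w \<noteq> k" unfolding S_def by auto
  qed
  have "(min k (p y), max k (p y)) = (min k (p z), max k (p z))"
    using mem[OF b1] mem[OF b2] cS fS card_le_Suc0_iff_eq by (metis One_nat_def)
  moreover have "p y \<noteq> k" "p z \<noteq> k" using mem b1 b2 by auto
  ultimately have "p y = p z" by (auto simp: min_def max_def split: if_splits)
  thus "y = z" using pv b1 b2 bk_VV by metis
qed

lemma iso2: assumes t: "tournament V E" and V: "V = {a,b}" and ne: "a \<noteq> b" and e: "E b a"
  shows "iso_to_P V E 2"
proof -
  have nab: "\<not> E a b" "\<not> E a a" "\<not> E b b" using t e ne V unfolding tournament_def by auto
  define f where "f = (\<lambda>i::nat. if i = 0 then a else b)"
  have z: "{0..<(2::nat)} = {0,1}" by auto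
  have "bij_betw f {0..<2} V"
    unfolding bij_betw_def inj_on_def z V using ne by (auto simp: f_def)
  moreover have "\<forall>i<2. \<forall>j<2. E (f i) (f j) \<longleftrightarrow> P_edge i j"
    using nab e by (auto simp: f_def P_edge_def less_2_cases_iff)
  ultimately show ?thesis unfolding iso_to_P_def by blast
qed

theorem corollary5p5:
  fixes V :: "'a set" and E :: "'a \<Rightarrow> 'a \<Rightarrow> bool"
  assumes "prime_tournament V E"
    and "\<forall>n. \<not> iso_to_P V E n"
  shows "\<forall>vs ws. matching_ordering V E vs \<and> matching_ordering V E ws \<longrightarrow> vs = ws"
proof (intro allI impI)
  fix vs ws assume h: "matching_ordering V E vs \<and> matching_ordering V E ws"
  have mv: "matching_ordering V E vs" and mw: "matching_ordering V E ws" using h by auto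
  have t: "tournament V E" using assms(1) unfolding prime_tournament_def by blast
  have dv: "distinct vs" "set vs = V" and dw: "distinct ws" "set ws = V"
    using mv mw unfolding matching_ordering_def ordering_of_def by auto
  define n where "n = length vs"
  have lw: "length ws = n" using dv dw distinct_card n_def by metis
  define p where "p = the_inv_into {..<length vs} ((!) vs)"
  define q where "q = the_inv_into {..<length ws} ((!) ws)"
  note P = pos_props[OF dv, folded p_def]
  note Q = pos_props[OF dw, folded q_def]
  have pm: "\<And>x y z. bk V E p x y \<Longrightarrow> bk V E p x z \<Longrightarrow> y = z"
    using match_bk[OF mv] P by blast
  have qm: "\<And>x y z. bk V E q x y \<Longrightarrow> bk V E q x z \<Longrightarrow> y = z"
    using match_bk[OF mw] Q by blast
  have pb: "bij_betw p V {..<n}" using P(1) n_def by simp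
  have qb: "bij_betw q V {..<n}" using Q(1) lw by simp
  interpret T0: TO0 V E p q n
    using t pb qb pm qm unfolding TO0_def by blast
  show "vs = ws"
  proof (rule ccontr)
    assume ne: "vs \<noteq> ws"
    have Vne: "V \<noteq> {}" using t unfolding tournament_def by blast
    show False
    proof (cases "n \<le> 2")
      case True
      have "n \<noteq> 0" using Vne dv n_def by auto
      hence "n = 1 \<or> n = 2" using True by linarith
      thus False
      proof
        assume n1: "n = 1"
        obtain a where a: "vs = [a]" using n1 n_def by (auto simp: length_Suc_conv)
        obtain b where b: "ws = [b]" using n1 lw by (auto simp: length_Suc_conv)
        have "a = b" using a b dv dw by auto
        thus False using ne a b by simp
      next
        assume n2: "n = 2"
        obtain a b where ab: "vs = [a,b]" using n2 n_def by (auto simp: numeral_2_eq_2 length_Suc_conv)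
        have abV: "V = {a,b}" "a \<noteq> b" using ab dv by auto
        have "iso_to_P V E 2"
        proof (cases "E b a")
          case True thus ?thesis using iso2[OF t abV] by blast
        next
          case False
          hence "E a b" using t abV unfolding tournament_def by blast
          moreover have "V = {b,a}" using abV by auto
          ultimately show ?thesis using iso2[OF t _ abV(2)[symmetric]] by blast
        qed
        thus False using assms(2) by blast
      qed
    next
      case False
      hence n3: "3 \<le> n" by simp
      have "\<exists>x0 y0. invp V p q x0 y0"
      proof (rule ccontr)
        assume ni: "\<not> ?thesis"
        have mono: "\<And>i j. i < j \<Longrightarrow> j < n \<Longrightarrow> q (vs!i) < q (vs!j)"
        proof -
          fix i j assume ij: "i < j" "j < n"
          have V2: "vs!i \<in> V" "vs!j \<in> V" using ij dv n_def by auto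
          have "vs!i \<noteq> vs!j" using ij dv n_def nth_eq_iff_index_eq by fastforce
          moreover have "p (vs!i) < p (vs!j)" using P(3) ij n_def by simp
          moreover have "\<not> invp V p q (vs!i) (vs!j)" using ni by blast
          ultimately show "q (vs!i) < q (vs!j)" using V2 unfolding invp_def by auto
        qed
        have "map q vs = [0..<n]"
        proof (rule sorted_distinct_set_unique)
          show "sorted (map q vs)" unfolding sorted_iff_nth_mono_less
            using mono n_def by (auto intro: less_imp_le)
          show "distinct (map q vs)" using dv T0.q_inj by (auto simp: distinct_map inj_on_def)
          show "set (map q vs) = set [0..<n]" using Q(1) dv lw unfolding bij_betw_def by auto
        qed auto
        hence "\<And>i. i < n \<Longrightarrow> q (vs!i) = i" by (metis add_0 n_def nth_map nth_upt)
        hence "\<And>i. i < n \<Longrightarrow> ws!i = vs!i" using Q(2) dv n_def nth_mem by metis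
        hence "vs = ws" using lw n_def by (simp add: nth_equalityI)
        thus False using ne by simp
      qed
      then obtain x0 y0 where r: "invp V p q x0 y0" by blast
      interpret T: TO V E p q n
      proof unfold_locales
        show "3 \<le> n" by (rule n3)
        show "prime_tournament V E" by (rule assms(1))
        fix x assume "x \<in> V"
        thus "\<exists>y. invp V p q x y" using T0.conn_all[OF assms(1) r] T0.partner_conn[OF r] by blast
      qed
      have "iso_to_P V E n" by (rule T.iso)
      thus False using assms(2) by blast
    qed
  qed
qed

end
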